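(* Let $\eta>0$, let $m^1,m^2,\dots\in\mathbb{R}^n$ be arbitrary loss predictions and $\ell^1,\ell^2,\dots\in\mathbb{R}^n$ arbitrary losses, set $x^0=\mathbf{1}/n$ and $v^t=\langle m^t,x^{t-1}\rangle\mathbf{1}-m^t$. (i) The procedure in $\Gamma$ that at each time $t$ takes $\theta^t=\arg\min_{\theta\in\mathbb{R}^n_{\ge0}}\{\langle L^{t-1}-v^t,\theta\rangle+\tfrac{1}{2\eta}\|\theta\|_2^2\}$ with $L^{t-1}=-\sum_{\tau<t}u(x^\tau,\ell^\tau)$ (predictive FTRL on $\mathbb{R}^n_{\ge0}$ with regularizer $\tfrac12\|\cdot\|_2^2$ and prediction $-v^t$) and plays $x^t=g(\theta^t)$ produces exactly the iterates of PRM. (ii) The procedure that sets $z^0=0$, at time $t$ takes $\theta^t=\arg\min_{\theta\in\mathbb{R}^n_{\ge0}}\{\langle -v^t,\theta\rangle+\tfrac{1}{2\eta}\|\theta-z^{t-1}\|_2^2\}$, plays $x^t=g(\theta^t)$, and after observing $\ell^t$ sets $z^t=\arg\min_{z\in\mathbb{R}^n_{\ge0}}\{\langle -u(x^t,\ell^t),z\rangle+\tfrac1{2\eta}\|z-z^{t-1}\|_2^2\}$ (predictive OMD) produces exactly the iterates of PRM$^+$. In both cases the iterates are independent of $\eta$ (with the same fixed point of $\Delta^n$ used whenever $\theta^t=0$). (iii) Both PRM and PRM$^+$ satisfy, for every $T\ge1$ and every $\hat{x}\in\Delta^n$, \[ R^T(\hat{x})=\sum_{t=1}^T\langle\ell^t,x^t-\hat{x}\rangle\le\sqrt2\Big(\sum_{t=1}^T\big\|\langle\ell^t,x^t\rangle\mathbf{1}-\langle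 m^t,x^{t-1}\rangle\mathbf{1}-(\ell^t-m^t)\big\|_2^2\Big)^{1/2}. \]
   Context: $\Delta^n=\{x\in\mathbb{R}^n_{\ge0}:\|x\|_1=1\}$; $\mathbf{1}$ is the all-ones vector; $[\cdot]^+$ is componentwise positive part. The game $\Gamma$ has Player 1 action set $\Delta^n$, Player 2 action set $\mathbb{R}^n$ (loss vectors), target set $\mathbb{R}^n_{\le0}$, and payoff $u(x,\ell)=\langle\ell,x\rangle\mathbf{1}-\ell$. For $a\in\mathbb{R}^n_{\ge0}$, $g(a)=a/\|a\|_1$ if $a\ne0$ and a fixed arbitrary point $\bar{x}\in\Delta^n$ if $a=0$. Predictive regret matching (PRM): $r^0=0$, $x^0=\mathbf{1}/n$; at time $t$, given prediction $m^t$, $\theta^t=[r^{t-1}+\langle m^t,x^{t-1}\rangle\mathbf{1}-m^t]^+$ and $x^t=g(\theta^t)$; after observing $\ell^t$, $r^t=r^{t-1}+\langle\ell^t,x^t\rangle\mathbf{1}-\ell^t$. Predictive regret matching$^+$ (PRM$^+$): $z^0=0$, $x^0=\mathbf{1}/n$; at time $t$, $\theta^t=[z^{t-1}+\langle m^t,x^{t-1}\rangle\mathbf{1}-m^t]^+$ and $x^t=g(\theta^t)$; after observing $\ell^t$, $z^t=[z^{t-1}+\langle\ell^t,x^t\rangle\mathbf{1}-\ell^t]^+$. *)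

theory Defs
  imports "HOL-Analysis.Analysis"
begin

definition ones :: "real ^ 'n" where
  "ones = (\<chi> i. 1)"

definition prob_simplex :: "(real ^ 'n) set" where
  "prob_simplex = {x. (\<forall>i. 0 \<le> x $ i) \<and> (\<Sum>i\<in>UNIV. \<bar>x $ i\<bar>) = 1}"

definition nonneg_orthant :: "(real ^ 'n) set" where
  "nonneg_orthant = {x. \<forall>i. 0 \<le> x $ i}"

definition pospart :: "real ^ 'n \<Rightarrow> real ^ 'n" where
  "pospart a = (\<chi> i. max 0 (a $ i))"

definition l1norm :: "real ^ 'n \<Rightarrow> real" where
  "l1norm a = (\<Sum>i\<in>UNIV. \<bar>a $ i\<bar>)"

definition gmap :: "real ^ 'n \<Rightarrow> real ^ 'n \<Rightarrow> real ^ 'n" where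
  "gmap xbar a = (if a = 0 then xbar else (1 / l1norm a) *\<^sub>R a)"

definition payoff :: "real ^ 'n \<Rightarrow> real ^ 'n \<Rightarrow> real ^ 'n" where
  "payoff x l = (inner l x) *\<^sub>R ones - l"

definition x0 :: "real ^ 'n" where
  "x0 = (\<chi> i. 1 / real CARD('n))"

definition vpred :: "real ^ 'n \<Rightarrow> real ^ 'n \<Rightarrow> real ^ 'n" where
  "vpred mt xprev = (inner mt xprev) *\<^sub>R ones - mt"

primrec prm :: "real ^ 'n \<Rightarrow> (nat \<Rightarrow> real ^ 'n) \<Rightarrow> (nat \<Rightarrow> real ^ 'n) \<Rightarrow> nat
    \<Rightarrow> (real ^ 'n) \<times> (real ^ 'n)" where
  "prm xbar m l 0 = (0, x0)"
| "prm xbar m l (Suc t) =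
     (let (r, x) = prm xbar m l t;
          \<theta> = pospart (r + vpred (m (Suc t)) x);
          x' = gmap xbar \<theta>
      in (r + payoff x' (l (Suc t)), x'))"

primrec prm_plus :: "real ^ 'n \<Rightarrow> (nat \<Rightarrow> real ^ 'n) \<Rightarrow> (nat \<Rightarrow> real ^ 'n) \<Rightarrow> nat
    \<Rightarrow> (real ^ 'n) \<times> (real ^ 'n)" where
  "prm_plus xbar m l 0 = (0, x0)"
| "prm_plus xbar m l (Suc t) =
     (let (z, x) = prm_plus xbar m l t;
          \<theta> = pospart (z + vpred (m (Suc t)) x);
          x' = gmap xbar \<theta>
      in (pospart (z + payoff x' (l (Suc t))), x'))"

primrec ftrl :: "real \<Rightarrow> real ^ 'n \<Rightarrow> (nat \<Rightarrow> real ^ 'n) \<Rightarrow> (nat \<Rightarrow> real ^ 'n) \<Rightarrow> nat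
    \<Rightarrow> (real ^ 'n) \<times> (real ^ 'n)" where
  "ftrl \<eta> xbar m l 0 = (0, x0)"
| "ftrl \<eta> xbar m l (Suc t) =
     (let (L, x) = ftrl \<eta> xbar m l t;
          v = vpred (m (Suc t)) x;
          \<theta> = arg_min (\<lambda>\<theta>. inner (L - v) \<theta> + (1 / (2 * \<eta>)) * (norm \<theta>)\<^sup>2)
                 (\<lambda>\<theta>. \<theta> \<in> nonneg_orthant);
          x' = gmap xbar \<theta>
      in (L - payoff x' (l (Suc t)), x'))"

primrec omd :: "real \<Rightarrow> real ^ 'n \<Rightarrow> (nat \<Rightarrow> real ^ 'n) \<Rightarrow> (nat \<Rightarrow> real ^ 'n) \<Rightarrow> nat
    \<Rightarrow> (real ^ 'n) \<times> (real ^ 'n)" where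
  "omd \<eta> xbar m l 0 = (0, x0)"
| "omd \<eta> xbar m l (Suc t) =
     (let (z, x) = omd \<eta> xbar m l t;
          v = vpred (m (Suc t)) x;
          \<theta> = arg_min (\<lambda>\<theta>. inner (- v) \<theta> + (1 / (2 * \<eta>)) * (norm (\<theta> - z))\<^sup>2)
                 (\<lambda>\<theta>. \<theta> \<in> nonneg_orthant);
          x' = gmap xbar \<theta>;
          z' = arg_min (\<lambda>z'. inner (- payoff x' (l (Suc t))) z' + (1 / (2 * \<eta>)) * (norm (z' - z))\<^sup>2)
                 (\<lambda>z'. z' \<in> nonneg_orthant)
      in (z', x'))"

definition regret_bound :: "(nat \<Rightarrow> real ^ 'n) \<Rightarrow> (nat \<Rightarrow> real ^ 'n) \<Rightarrow> (nat \<Rightarrow> real ^ 'n) \<Rightarrow> bool" where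
  "regret_bound x m l \<longleftrightarrow>
     (\<forall>T \<ge> 1. \<forall>xhat \<in> prob_simplex.
        (\<Sum>t = 1..T. inner (l t) (x t - xhat))
        \<le> sqrt 2 * sqrt (\<Sum>t = 1..T.
              (norm ((inner (l t) (x t)) *\<^sub>R ones - (inner (m t) (x (t - 1))) *\<^sub>R ones - (l t - m t)))\<^sup>2))"

end

theory Submission
  imports Defs
begin

lemma sA: "(max 0 (b::real))^2 \<le> (max 0 a)^2 + 2*max 0 a*(b-a) + (b-a)^2"
proof (cases "a \<ge> 0")
  case True
  then show ?thesis by (cases "b \<ge> 0") (auto simp: max_def power2_eq_square algebra_simps)
next
  case False
  then show ?thesis by (cases "b \<ge> 0") (auto simp: max_def power2_eq_square intro: mult_mono)
qed

lemma sB: "(max 0 (c::real))^2 \<ge> (max 0 a)^2 + 2*max 0 a*(c-a)"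
proof (cases "a \<ge> 0")
  case True
  note a = True
  show ?thesis
  proof (cases "c \<ge> 0")
    case True
    have "0 \<le> (c-a)^2" by simp
    thus ?thesis using a True by (simp add: power2_eq_square algebra_simps)
  next
    case False
    have "a*c \<le> 0" using a False by (simp add: mult_nonneg_nonpos)
    moreover have "a^2 + 2*a*(c-a) = 2*(a*c) - a^2" by (simp add: power2_eq_square algebra_simps)
    ultimately have "a^2 + 2*a*(c-a) \<le> 0" using zero_le_power2[of a] by linarith
    thus ?thesis using a False by (simp add: max_def)
  qed
next
  case False
  then show ?thesis by (auto simp: max_def)
qed

lemma sL1: "(max 0 (r+u::real))^2 \<le> (max 0 r)^2 + 2*u*max 0 (r+v) + (u-v)^2"
proof -
  have 1: "(max 0 (r+u))^2 \<le> (max 0 (r+v))^2 + 2*max 0 (r+v)*((r+u)-(r+v)) + ((r+u)-(r+v))^2"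
    by (rule sA)
  have 2: "(max 0 r)^2 \<ge> (max 0 (r+v))^2 + 2*max 0 (r+v)*(r-(r+v))"
    by (rule sB)
  show ?thesis using 1 2 by (simp add: algebra_simps)
qed

lemma sL3: "(y::real) \<ge> 0 \<Longrightarrow> 2*r*y - y^2 \<le> (max 0 r)^2"
proof -
  assume y: "y \<ge> 0"
  show ?thesis
  proof (cases "r \<ge> 0")
    case True
    have "0 \<le> (r-y)^2" by simp
    thus ?thesis using True by (simp add: power2_eq_square algebra_simps)
  next
    case False
    have "r*y \<le> 0" using y False by (simp add: mult_nonpos_nonneg)
    hence "2*r*y - y^2 \<le> 0" using zero_le_power2[of y] by linarith
    thus ?thesis using False by (simp add: max_def)
  qed
qed

lemma sP: "(y::real) \<ge> 0 \<Longrightarrow> (a - max 0 a) * (y - max 0 a) \<le> 0"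
  by (cases "a \<ge> 0") (auto simp: max_def mult_nonpos_nonneg)

lemma sL2g: fixes y z u v p q :: real
  assumes "(z+u-p)*(y-p) \<le> 0" "(z+v-q)*(p-q) \<le> 0"
  shows "2*u*(y-q) \<le> (y-z)^2 - (y-p)^2 + (u-v)^2"
proof -
  have "0 \<le> (q-z)^2" by simp
  moreover have "0 \<le> (u-v-(p-q))^2" by simp
  ultimately show ?thesis using assms by (simp add: power2_eq_square algebra_simps)
qed

lemma sL2: "(y::real) \<ge> 0 \<Longrightarrow> 2*u*(y - max 0 (z+v)) \<le> (y-z)^2 - (y - max 0 (z+u))^2 + (u-v)^2"
  by (rule sL2g) (auto intro: sP)

lemma sL4: "(cc::real) > 0 \<Longrightarrow> tt \<ge> 0 \<Longrightarrow> aa*tt + cc*(tt-zz)^2 \<ge> aa*max 0 (zz - aa/(2*cc)) + cc*(max 0 (zz - aa/(2*cc)) - zz)^2 + cc*(tt - max 0 (zz - aa/(2*cc)))^2"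
proof -
  assume c: "cc > 0" and t: "tt \<ge> 0"
  define ww where "ww = zz - aa/(2*cc)"
  define ss where "ss = max 0 ww"
  have a: "aa = 2*cc*(zz - ww)" using c unfolding ww_def by (simp add: field_simps)
  have "(tt - ss)*(ss - ww) \<ge> 0" using sP[OF t, of ww] unfolding ss_def by (simp add: algebra_simps)
  hence "cc*((tt - ss)*(ss - ww)) \<ge> 0" using c by simp
  hence "aa*tt + cc*(tt-zz)^2 - (aa* ss + cc*(ss-zz)^2 + cc*(tt-ss)^2) \<ge> 0"
    unfolding a by (simp add: power2_eq_square algebra_simps)
  thus ?thesis unfolding ss_def ww_def by simp
qed

lemma normsq: "(norm (x::real^'n))^2 = (\<Sum>i\<in>UNIV. (x$i)^2)"
  by (simp only: power2_norm_eq_inner) (simp add: inner_vec_def power2_eq_square)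

lemma inner_comp: "inner (x::real^'n) y = (\<Sum>i\<in>UNIV. x$i * y$i)"
  by (simp add: inner_vec_def)

lemma pospart_nonneg: "0 \<le> pospart a $ i"
  by (simp add: pospart_def)

lemma pospart_scale: "(c::real) \<ge> 0 \<Longrightarrow> pospart (c *\<^sub>R a) = c *\<^sub>R pospart (a::real^'n)"
proof -
  assume c: "c \<ge> 0"
  have "max 0 (c * x) = c * max 0 x" for x :: real
  proof (cases "x \<ge> 0")
    case True thus ?thesis using c by (simp add: max_def)
  next
    case False
    hence "c * x \<le> 0" using c by (simp add: mult_nonneg_nonpos)
    thus ?thesis using False by (simp add: max_def)
  qed
  thus ?thesis by (simp add: pospart_def vec_eq_iff)
qed

lemma l1norm_nonneg_eq: "(\<forall>i. 0 \<le> a $ i) \<Longrightarrow> l1norm a = inner ones a"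
  by (simp add: l1norm_def inner_comp ones_def)

lemma l1norm_pos: "(\<forall>i. 0 \<le> (a::real^'n) $ i) \<Longrightarrow> a \<noteq> 0 \<Longrightarrow> l1norm a \<noteq> 0"
proof
  assume nn: "\<forall>i. 0 \<le> a $ i" and ne: "a \<noteq> 0" and z: "l1norm a = 0"
  have "\<forall>i\<in>UNIV. \<bar>a$i\<bar> = 0"
    using z unfolding l1norm_def by (subst sum_nonneg_eq_0_iff[symmetric]) auto
  hence "a = 0" by (simp add: vec_eq_iff)
  thus False using ne by simp
qed

lemma gmap_scale: "(c::real) > 0 \<Longrightarrow> gmap xbar (c *\<^sub>R a) = gmap xbar (a::real^'n)"
proof -
  assume c: "c > 0"
  have l: "l1norm (c *\<^sub>R a) = c * l1norm a"
    using c by (simp add: l1norm_def abs_mult sum_distrib_left)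
  show ?thesis using c unfolding gmap_def l by (simp add: scaleR_scaleR)
qed

lemma orth:
  assumes nn: "\<forall>i. 0 \<le> (\<theta>::real^'n) $ i"
  shows "inner \<theta> (payoff (gmap xbar \<theta>) ll) = 0"
proof (cases "\<theta> = 0")
  case True thus ?thesis by simp
next
  case False
  define L where "L = l1norm \<theta>"
  have L0: "L \<noteq> 0" using l1norm_pos[OF nn False] L_def by simp
  have Lo: "inner \<theta> ones = L" using l1norm_nonneg_eq[OF nn] L_def by (simp add: inner_commute)
  have g: "gmap xbar \<theta> = (1/L) *\<^sub>R \<theta>" using False by (simp add: gmap_def L_def)
  show ?thesis unfolding payoff_def g using L0 Lo
    by (simp add: inner_diff_right inner_commute)
qed

lemma argmin_orth:
  fixes a z :: "real^'n" and c :: real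
  assumes c: "c > 0"
  shows "arg_min (\<lambda>\<theta>. inner a \<theta> + c * (norm (\<theta> - z))\<^sup>2) (\<lambda>\<theta>. \<theta> \<in> nonneg_orthant)
         = pospart (z - (1/(2*c)) *\<^sub>R a)"
proof -
  define f where "f = (\<lambda>\<theta>::real^'n. inner a \<theta> + c * (norm (\<theta> - z))\<^sup>2)"
  define s where "s = pospart (z - (1/(2*c)) *\<^sub>R a)"
  have fc: "f \<theta> = (\<Sum>i\<in>UNIV. a$i * \<theta>$i + c * (\<theta>$i - z$i)^2)" for \<theta>
    unfolding f_def by (simp add: inner_comp normsq sum.distrib sum_distrib_left)
  have si: "s $ i = max 0 (z$i - a$i/(2*c))" for i
    unfolding s_def pospart_def by simp
  have sn: "s \<in> nonneg_orthant" unfolding nonneg_orthant_def s_def by (simp add: pospart_nonneg)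
  have key: "f \<theta> \<ge> f s + c * (norm (\<theta> - s))\<^sup>2" if "\<theta> \<in> nonneg_orthant" for \<theta>
  proof -
    have "f s + c * (norm (\<theta> - s))\<^sup>2 = (\<Sum>i\<in>UNIV. a$i * s$i + c * (s$i - z$i)^2 + c*(\<theta>$i - s$i)^2)"
      unfolding fc normsq by (simp add: sum.distrib sum_distrib_left)
    also have "\<dots> \<le> (\<Sum>i\<in>UNIV. a$i * \<theta>$i + c * (\<theta>$i - z$i)^2)"
    proof (rule sum_mono)
      fix i
      have "0 \<le> \<theta>$i" using that unfolding nonneg_orthant_def by simp
      from sL4[OF c this, of "a$i" "z$i"]
      show "a$i * s$i + c * (s$i - z$i)^2 + c*(\<theta>$i - s$i)^2 \<le> a$i * \<theta>$i + c * (\<theta>$i - z$i)^2"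
        unfolding si by simp
    qed
    finally show ?thesis unfolding fc by simp
  qed
  have "arg_min f (\<lambda>\<theta>. \<theta> \<in> nonneg_orthant) = s"
    unfolding arg_min_def
  proof (rule some_equality)
    show "is_arg_min f (\<lambda>\<theta>. \<theta> \<in> nonneg_orthant) s"
      unfolding is_arg_min_def
    proof (intro conjI notI)
      show "s \<in> nonneg_orthant" by (rule sn)
      assume "\<exists>y. y \<in> nonneg_orthant \<and> f y < f s"
      then obtain y where y: "y \<in> nonneg_orthant" "f y < f s" by blast
      have "0 \<le> c * (norm (y - s))\<^sup>2" using c by simp
      with key[OF y(1)] y(2) show False by linarith
    qed
  next
    fix x assume "is_arg_min f (\<lambda>\<theta>. \<theta> \<in> nonneg_orthant) x"
    hence xn: "x \<in> nonneg_orthant" and "\<not> f s < f x" using sn unfolding is_arg_min_def by auto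
    hence "f x \<le> f s" by simp
    with key[OF xn] have "c * (norm (x - s))\<^sup>2 \<le> 0" by simp
    hence "(norm (x - s))\<^sup>2 \<le> 0" using c by (simp add: mult_le_0_iff)
    thus "x = s" by simp
  qed
  thus ?thesis unfolding f_def s_def .
qed


lemma prm_Suc:
  "prm xbar m l (Suc t) =
    (fst (prm xbar m l t) + payoff (gmap xbar (pospart (fst (prm xbar m l t) + vpred (m (Suc t)) (snd (prm xbar m l t))))) (l (Suc t)),
     gmap xbar (pospart (fst (prm xbar m l t) + vpred (m (Suc t)) (snd (prm xbar m l t)))))"
  by (simp add: Let_def case_prod_beta)

lemma prm_plus_Suc:
  "prm_plus xbar m l (Suc t) =
    (pospart (fst (prm_plus xbar m l t) + payoff (gmap xbar (pospart (fst (prm_plus xbar m l t) + vpred (m (Suc t)) (snd (prm_plus xbar m l t))))) (l (Suc t))),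
     gmap xbar (pospart (fst (prm_plus xbar m l t) + vpred (m (Suc t)) (snd (prm_plus xbar m l t)))))"
  by (simp add: Let_def case_prod_beta)

lemma eta_simp: "(\<eta>::real) > 0 \<Longrightarrow> 1 / (2 * (1 / (2 * \<eta>))) = \<eta>"
  by simp

lemma ftrl_eq:
  assumes "\<eta> > 0"
  shows "ftrl \<eta> xbar m l t = (- fst (prm xbar m l t), snd (prm xbar m l t))"
proof (induction t)
  case 0 thus ?case by simp
next
  case (Suc t)
  define R where "R = fst (prm xbar m l t)"
  define X where "X = snd (prm xbar m l t)"
  define v where "v = vpred (m (Suc t)) X"
  have IH: "ftrl \<eta> xbar m l t = (- R, X)" using Suc R_def X_def by simp
  have c: "1 / (2 * \<eta>) > 0" using assms by simp
  have am: "arg_min (\<lambda>\<theta>. inner (- R - v) \<theta> + (1 / (2 * \<eta>)) * (norm \<theta>)\<^sup>2) (\<lambda>\<theta>. \<theta> \<in> nonneg_orthant)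
      = \<eta> *\<^sub>R pospart (R + v)"
  proof -
    have "arg_min (\<lambda>\<theta>. inner (- R - v) \<theta> + (1 / (2 * \<eta>)) * (norm \<theta>)\<^sup>2) (\<lambda>\<theta>. \<theta> \<in> nonneg_orthant)
      = arg_min (\<lambda>\<theta>. inner (- R - v) \<theta> + (1 / (2 * \<eta>)) * (norm (\<theta> - 0))\<^sup>2) (\<lambda>\<theta>. \<theta> \<in> nonneg_orthant)"
      by simp
    also have "\<dots> = pospart (0 - (1 / (2 * (1 / (2 * \<eta>)))) *\<^sub>R (- R - v))"
      by (rule argmin_orth[OF c])
    also have "\<dots> = pospart (\<eta> *\<^sub>R (R + v))"
      using assms by (simp add: algebra_simps)
    also have "\<dots> = \<eta> *\<^sub>R pospart (R + v)"
      using assms by (simp add: pospart_scale)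
    finally show ?thesis .
  qed
  have g: "gmap xbar (\<eta> *\<^sub>R pospart (R + v)) = gmap xbar (pospart (R + v))"
    using assms by (rule gmap_scale)
  show ?case
    unfolding ftrl.simps IH Let_def prod.case prm_Suc R_def[symmetric] X_def[symmetric] v_def[symmetric] am g
    by simp
qed

lemma omd_eq:
  assumes "\<eta> > 0"
  shows "omd \<eta> xbar m l t = (\<eta> *\<^sub>R fst (prm_plus xbar m l t), snd (prm_plus xbar m l t))"
proof (induction t)
  case 0 thus ?case by simp
next
  case (Suc t)
  define Z where "Z = fst (prm_plus xbar m l t)"
  define X where "X = snd (prm_plus xbar m l t)"
  define v where "v = vpred (m (Suc t)) X"
  have IH: "omd \<eta> xbar m l t = (\<eta> *\<^sub>R Z, X)" using Suc Z_def X_def by simp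
  have c: "1 / (2 * \<eta>) > 0" using assms by simp
  have am: "arg_min (\<lambda>\<theta>. inner (- w) \<theta> + (1 / (2 * \<eta>)) * (norm (\<theta> - \<eta> *\<^sub>R Z))\<^sup>2) (\<lambda>\<theta>. \<theta> \<in> nonneg_orthant)
      = \<eta> *\<^sub>R pospart (Z + w)" for w
  proof -
    have "arg_min (\<lambda>\<theta>. inner (- w) \<theta> + (1 / (2 * \<eta>)) * (norm (\<theta> - \<eta> *\<^sub>R Z))\<^sup>2) (\<lambda>\<theta>. \<theta> \<in> nonneg_orthant)
       = pospart (\<eta> *\<^sub>R Z - (1 / (2 * (1 / (2 * \<eta>)))) *\<^sub>R (- w))"
      by (rule argmin_orth[OF c])
    also have "\<dots> = pospart (\<eta> *\<^sub>R (Z + w))"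
      using assms by (simp add: algebra_simps)
    also have "\<dots> = \<eta> *\<^sub>R pospart (Z + w)"
      using assms by (simp add: pospart_scale)
    finally show ?thesis .
  qed
  have g: "gmap xbar (\<eta> *\<^sub>R pospart (Z + v)) = gmap xbar (pospart (Z + v))"
    using assms by (rule gmap_scale)
  show ?case
    unfolding omd.simps IH Let_def prod.case prm_plus_Suc Z_def[symmetric] X_def[symmetric] v_def[symmetric] am g
    by simp
qed


lemma simplex_facts:
  assumes "xhat \<in> prob_simplex"
  shows "inner ones xhat = 1" "(norm xhat)\<^sup>2 \<le> 1" "\<forall>i. 0 \<le> (xhat::real^'n) $ i"
proof -
  have nn: "\<forall>i. 0 \<le> xhat $ i" and s1: "(\<Sum>i\<in>UNIV. xhat $ i) = 1"
    using assms unfolding prob_simplex_def by auto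
  show "inner ones xhat = 1" using s1 by (simp add: inner_comp ones_def)
  show "\<forall>i. 0 \<le> xhat $ i" by (rule nn)
  have le1: "xhat $ i \<le> 1" for i
  proof -
    have "xhat $ i \<le> (\<Sum>j\<in>UNIV. xhat $ j)"
      by (rule member_le_sum) (use nn in auto)
    thus ?thesis using s1 by simp
  qed
  have "(norm xhat)\<^sup>2 = (\<Sum>i\<in>UNIV. (xhat$i)^2)" by (rule normsq)
  also have "\<dots> \<le> (\<Sum>i\<in>UNIV. xhat$i)"
  proof (rule sum_mono)
    fix i
    have "xhat$i * xhat$i \<le> 1 * xhat$i" using nn le1 by (intro mult_right_mono) auto
    thus "(xhat$i)^2 \<le> xhat$i" by (simp add: power2_eq_square)
  qed
  finally show "(norm xhat)\<^sup>2 \<le> 1" using s1 by simp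
qed

lemma regret_final:
  fixes r :: "real^'n" and S :: real
  assumes core: "\<forall>y. (\<forall>i. 0 \<le> y$i) \<longrightarrow> 2 * inner r y - (norm y)\<^sup>2 \<le> S"
    and xs: "xhat \<in> prob_simplex"
  shows "inner r xhat \<le> sqrt 2 * sqrt S"
proof (cases "inner r xhat \<le> 0")
  case True
  have "0 \<le> sqrt 2 * sqrt S" if "S \<ge> 0" using that by simp
  moreover have "S \<ge> 0"
  proof -
    have "\<forall>i. 0 \<le> (0::real^'n) $ i" by simp
    hence "2 * inner r 0 - (norm (0::real^'n))\<^sup>2 \<le> S" using core by blast
    thus ?thesis by simp
  qed
  ultimately show ?thesis using True by linarith
next
  case False
  define a where "a = inner r xhat"
  have a0: "a > 0" using False a_def by simp
  have nn: "\<forall>i. 0 \<le> (a *\<^sub>R xhat) $ i" using simplex_facts(3)[OF xs] a0 by simp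
  have "2 * inner r (a *\<^sub>R xhat) - (norm (a *\<^sub>R xhat))\<^sup>2 \<le> S" using core nn by blast
  hence "2 * a * a - a^2 * (norm xhat)\<^sup>2 \<le> S"
    by (simp add: a_def power_mult_distrib)
  moreover have "a^2 * (norm xhat)\<^sup>2 \<le> a^2 * 1"
    using simplex_facts(2)[OF xs] by (intro mult_left_mono) auto
  ultimately have aS: "a^2 \<le> S" by (simp add: power2_eq_square)
  hence "a \<le> sqrt S" by (rule real_le_rsqrt)
  moreover have "sqrt S \<le> sqrt 2 * sqrt S"
  proof -
    have "0 \<le> S" using aS zero_le_power2[of a] by linarith
    hence "1 * sqrt S \<le> sqrt 2 * sqrt S" by (intro mult_right_mono) auto
    thus ?thesis by simp
  qed
  ultimately show ?thesis using a_def by simp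
qed

lemma regret_eq:
  assumes "xhat \<in> prob_simplex"
  shows "(\<Sum>t = 1..T. inner (l t) (x t - xhat)) = inner (\<Sum>t = 1..T. payoff (x t) (l t)) xhat"
proof -
  have o: "inner ones xhat = 1" using simplex_facts(1)[OF assms] .
  have "inner (payoff (x t) (l t)) xhat = inner (l t) (x t - xhat)" for t
    unfolding payoff_def using o by (simp add: inner_diff_left inner_diff_right inner_commute)
  thus ?thesis by (simp add: inner_sum_left)
qed

lemma regret_from_core:
  fixes x m l :: "nat \<Rightarrow> real^'n"
  assumes core: "\<And>T y. (\<forall>i. 0 \<le> y$i) \<Longrightarrow> 2 * inner (\<Sum>t = 1..T. payoff (x t) (l t)) y - (norm y)\<^sup>2
      \<le> (\<Sum>t = 1..T. (norm (payoff (x t) (l t) - vpred (m t) (x (t - 1))))\<^sup>2)"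
  shows "regret_bound x m l"
  unfolding regret_bound_def
proof (intro allI impI ballI)
  fix T :: nat and xhat :: "real^'n" assume xs: "xhat \<in> prob_simplex"
  have e: "(inner (l t) (x t)) *\<^sub>R ones - (inner (m t) (x (t - 1))) *\<^sub>R ones - (l t - m t)
      = payoff (x t) (l t) - vpred (m t) (x (t - 1))" for t
    by (simp add: payoff_def vpred_def algebra_simps)
  show "(\<Sum>t = 1..T. inner (l t) (x t - xhat)) \<le> sqrt 2 * sqrt (\<Sum>t = 1..T.
              (norm ((inner (l t) (x t)) *\<^sub>R ones - (inner (m t) (x (t - 1))) *\<^sub>R ones - (l t - m t)))\<^sup>2)"
    unfolding e regret_eq[OF xs]
    by (rule regret_final[OF _ xs]) (use core in blast)
qed


lemma prm_r: "fst (prm xbar m l T) = (\<Sum>t = 1..T. payoff (snd (prm xbar m l t)) (l t))"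
proof (induction T)
  case 0 thus ?case by simp
next
  case (Suc T)
  show ?case using Suc by (simp del: prm.simps add: prm_Suc[of xbar m l T])
qed

lemma prm_pot:
  "(\<Sum>i\<in>UNIV. (max 0 (fst (prm xbar m l T) $ i))\<^sup>2)
   \<le> (\<Sum>t = 1..T. (norm (payoff (snd (prm xbar m l t)) (l t) - vpred (m t) (snd (prm xbar m l (t - 1)))))\<^sup>2)"
proof (induction T)
  case 0 thus ?case by simp
next
  case (Suc T)
  define R where "R = fst (prm xbar m l T)"
  define X where "X = snd (prm xbar m l T)"
  define v where "v = vpred (m (Suc T)) X"
  define \<theta> where "\<theta> = pospart (R + v)"
  define u where "u = payoff (gmap xbar \<theta>) (l (Suc T))"
  have st: "prm xbar m l (Suc T) = (R + u, gmap xbar \<theta>)"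
    unfolding prm_Suc R_def[symmetric] X_def[symmetric] v_def[symmetric] \<theta>_def[symmetric] u_def ..
  have o: "inner \<theta> u = 0" unfolding u_def by (rule orth) (simp add: \<theta>_def pospart_nonneg)
  have "(\<Sum>i\<in>UNIV. (max 0 ((R + u) $ i))\<^sup>2)
      \<le> (\<Sum>i\<in>UNIV. (max 0 (R $ i))\<^sup>2 + 2 * (\<theta>$i * u$i) + (u$i - v$i)^2)"
  proof (rule sum_mono)
    fix i
    show "(max 0 ((R + u) $ i))\<^sup>2 \<le> (max 0 (R $ i))\<^sup>2 + 2 * (\<theta>$i * u$i) + (u$i - v$i)^2"
      using sL1[of "R$i" "u$i" "v$i"] by (simp add: \<theta>_def pospart_def algebra_simps)
  qed
  also have "\<dots> = (\<Sum>i\<in>UNIV. (max 0 (R $ i))\<^sup>2) + 2 * inner \<theta> u + (norm (u - v))\<^sup>2"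
    by (simp add: sum.distrib sum_distrib_left inner_comp normsq)
  also have "\<dots> \<le> (\<Sum>t = 1..T. (norm (payoff (snd (prm xbar m l t)) (l t) - vpred (m t) (snd (prm xbar m l (t - 1)))))\<^sup>2)
      + (norm (u - v))\<^sup>2"
    using Suc o R_def by simp
  finally have calc: "(\<Sum>i\<in>UNIV. (max 0 ((R + u) $ i))\<^sup>2) \<le> (\<Sum>t = 1..T. (norm (payoff (snd (prm xbar m l t)) (l t) - vpred (m t) (snd (prm xbar m l (t - 1)))))\<^sup>2)
      + (norm (u - v))\<^sup>2" .
  show ?case using calc
    by (simp del: prm.simps add: st u_def[symmetric] v_def[symmetric] X_def[symmetric] R_def[symmetric])
qed

lemma prm_core:
  assumes "\<forall>i. 0 \<le> y$i"
  shows "2 * inner (\<Sum>t = 1..T. payoff (snd (prm xbar m l t)) (l t)) y - (norm y)\<^sup>2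
      \<le> (\<Sum>t = 1..T. (norm (payoff (snd (prm xbar m l t)) (l t) - vpred (m t) (snd (prm xbar m l (t - 1)))))\<^sup>2)"
proof -
  define R where "R = fst (prm xbar m l T)"
  have "2 * inner R y - (norm y)\<^sup>2 = (\<Sum>i\<in>UNIV. 2 * R$i * y$i - (y$i)^2)"
    by (simp add: inner_comp normsq sum_subtractf sum_distrib_left algebra_simps)
  also have "\<dots> \<le> (\<Sum>i\<in>UNIV. (max 0 (R $ i))\<^sup>2)"
    by (rule sum_mono) (use sL3 assms in blast)
  also have "\<dots> \<le> (\<Sum>t = 1..T. (norm (payoff (snd (prm xbar m l t)) (l t) - vpred (m t) (snd (prm xbar m l (t - 1)))))\<^sup>2)"
    unfolding R_def by (rule prm_pot)
  finally show ?thesis unfolding R_def prm_r .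
qed

lemma prmp_core:
  assumes y: "\<forall>i. 0 \<le> y$i"
  shows "2 * inner (\<Sum>t = 1..T. payoff (snd (prm_plus xbar m l t)) (l t)) y + (norm (y - fst (prm_plus xbar m l T)))\<^sup>2
      \<le> (norm y)\<^sup>2 + (\<Sum>t = 1..T. (norm (payoff (snd (prm_plus xbar m l t)) (l t) - vpred (m t) (snd (prm_plus xbar m l (t - 1)))))\<^sup>2)"
proof (induction T)
  case 0 thus ?case by simp
next
  case (Suc T)
  define Z where "Z = fst (prm_plus xbar m l T)"
  define X where "X = snd (prm_plus xbar m l T)"
  define v where "v = vpred (m (Suc T)) X"
  define \<theta> where "\<theta> = pospart (Z + v)"
  define u where "u = payoff (gmap xbar \<theta>) (l (Suc T))"
  have st: "prm_plus xbar m l (Suc T) = (pospart (Z + u), gmap xbar \<theta>)"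
    unfolding prm_plus_Suc Z_def[symmetric] X_def[symmetric] v_def[symmetric] \<theta>_def[symmetric] u_def ..
  have o: "inner \<theta> u = 0" unfolding u_def by (rule orth) (simp add: \<theta>_def pospart_nonneg)
  have "(\<Sum>i\<in>UNIV. 2 * u$i * (y$i - \<theta>$i))
      \<le> (\<Sum>i\<in>UNIV. (y$i - Z$i)^2 - (y$i - pospart (Z + u) $ i)^2 + (u$i - v$i)^2)"
  proof (rule sum_mono)
    fix i
    show "2 * u$i * (y$i - \<theta>$i) \<le> (y$i - Z$i)^2 - (y$i - pospart (Z + u) $ i)^2 + (u$i - v$i)^2"
      using sL2[of "y$i" "u$i" "Z$i" "v$i"] y by (simp add: \<theta>_def pospart_def)
  qed
  hence "2 * inner u y - 2 * inner \<theta> u \<le> (norm (y - Z))\<^sup>2 - (norm (y - pospart (Z + u)))\<^sup>2 + (norm (u - v))\<^sup>2"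
    by (simp add: inner_comp normsq sum_subtractf sum.distrib sum_distrib_left algebra_simps)
  hence "2 * inner u y + (norm (y - pospart (Z + u)))\<^sup>2 \<le> (norm (y - Z))\<^sup>2 + (norm (u - v))\<^sup>2"
    using o by simp
  with Suc show ?case
    by (simp del: prm_plus.simps add: st u_def[symmetric] v_def[symmetric] X_def[symmetric] Z_def[symmetric] inner_add_left)
qed

theorem mainTheorem7:
  fixes \<eta> :: real and xbar :: "real ^ 'n" and m l :: "nat \<Rightarrow> real ^ 'n"
  assumes "\<eta> > 0" and "xbar \<in> prob_simplex"
  shows "(\<forall>t. snd (ftrl \<eta> xbar m l t) = snd (prm xbar m l t))
       \<and> (\<forall>t. snd (omd \<eta> xbar m l t) = snd (prm_plus xbar m l t))
       \<and> regret_bound (\<lambda>t. snd (prm xbar m l t)) m l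
       \<and> regret_bound (\<lambda>t. snd (prm_plus xbar m l t)) m l"
proof (intro conjI allI)
  fix t
  show "snd (ftrl \<eta> xbar m l t) = snd (prm xbar m l t)" by (simp only: ftrl_eq[OF assms(1)] snd_conv)
next
  fix t
  show "snd (omd \<eta> xbar m l t) = snd (prm_plus xbar m l t)" by (simp only: omd_eq[OF assms(1)] snd_conv)
next
  show "regret_bound (\<lambda>t. snd (prm xbar m l t)) m l"
    by (rule regret_from_core) (rule prm_core)
next
  show "regret_bound (\<lambda>t. snd (prm_plus xbar m l t)) m l"
  proof (rule regret_from_core)
    fix T and y :: "real^'n" assume y: "\<forall>i. 0 \<le> y$i"
    from prmp_core[OF y, where T=T and xbar=xbar and m=m and l=l] zero_le_power2[of "norm (y - fst (prm_plus xbar m l T))"]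
    show "2 * inner (\<Sum>t = 1..T. payoff (snd (prm_plus xbar m l t)) (l t)) y - (norm y)\<^sup>2
      \<le> (\<Sum>t = 1..T. (norm (payoff (snd (prm_plus xbar m l t)) (l t) - vpred (m t) (snd (prm_plus xbar m l (t - 1)))))\<^sup>2)"
      by linarith
  qed
qed

end
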